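(* Let $0<\gamma<1$, $\alpha,\beta\in\mathbb{R}$, and let $(T_k)_{k=1}^\infty$ be a sequence of positive reals with $T_k\to\infty$. Assume that the sequence of empirical measures $(\delta^{T_k}_{A^+,\tau_{\alpha,\beta}\Gamma})_{k=1}^\infty$ exhibits $\gamma$-escape of mass, i.e. \[ \limsup_{k\to\infty}\delta^{T_k}_{A^+,\tau_{\alpha,\beta}\Gamma}(K)\leq 1-\gamma \] for every compact subset $K\subset X$. Then for any $0<\varepsilon<1/2$, \[ \liminf_{k\to\infty}\frac{(\log T_k)^2}{T_k^2}\left|\left\{n\in\mathbb{N}\ \middle|\ n<e^{2T_k},\ n\langle n\alpha\rangle\langle n\beta\rangle<\varepsilon\right\}\right|\geq\frac{\gamma}{18}. \]
   Context: $G=\mathrm{SL}(3,\mathbb{R})$, $\Gamma=\mathrm{SL}(3,\mathbb{Z})$, $X=G/\Gamma$, with $G$ acting by left multiplication. For $s,t\in\mathbb{R}$, $a_{s,t}=\mathrm{diag}(e^{-s-t},e^s,e^t)$, and $A^+=\{a_{s,t}: s,t\ge 0\}$. For $x\in X$ and $T>0$, the empirical measure is $\delta^T_{A^+,x}=\frac{1}{T^2}\int_{[0,T]^2}\delta_{a_{s,t}x}\,ds\,dt$. For $(\alpha,\beta)\in\mathbb{R}^2$, $\tau_{\alpha,\beta}$ is the lower triangular unipotent matrix with first column $(1,\alpha,\beta)^t$ and other columns $(0,1,0)^t,(0,0,1)^t$. $\langle x\rangle$ denotes the distance from $x\in\mathbb{R}$ to the nearest integer. *)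

theory Defs
  imports "HOL-Analysis.Analysis"
begin

type_synonym mat3 = "real^3^3"

definition SL3R :: "mat3 set" where
  "SL3R = {g. det g = 1}"

definition SL3Z :: "mat3 set" where
  "SL3Z = {g. det g = 1 \<and> (\<forall>i j. g $ i $ j \<in> \<int>)}"

definition coset :: "mat3 \<Rightarrow> mat3 set" where
  "coset g = (\<lambda>h. g ** h) ` SL3Z"

definition Xspace :: "mat3 set set" where
  "Xspace = coset ` SL3R"

definition X_top :: "mat3 set topology" where
  "X_top = topology (\<lambda>U. U \<subseteq> Xspace \<and> openin (top_of_set SL3R) {g \<in> SL3R. coset g \<in> U})"


lemma istopology_X_top:
  "istopology (\<lambda>U. U \<subseteq> Xspace \<and> openin (top_of_set SL3R) {g \<in> SL3R. coset g \<in> U})"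
  unfolding istopology_def
proof (rule conjI; intro allI impI ballI)
  fix S T assume "S \<subseteq> Xspace \<and> openin (top_of_set SL3R) {g \<in> SL3R. coset g \<in> S}"
    and "T \<subseteq> Xspace \<and> openin (top_of_set SL3R) {g \<in> SL3R. coset g \<in> T}"
  moreover have "{g \<in> SL3R. coset g \<in> S \<inter> T} = {g \<in> SL3R. coset g \<in> S} \<inter> {g \<in> SL3R. coset g \<in> T}" by auto
  ultimately show "S \<inter> T \<subseteq> Xspace \<and> openin (top_of_set SL3R) {g \<in> SL3R. coset g \<in> S \<inter> T}" by (auto intro: openin_Int)
next
  fix K assume H: "\<forall>U\<in>K. U \<subseteq> Xspace \<and> openin (top_of_set SL3R) {g \<in> SL3R. coset g \<in> U}"
  have "{g \<in> SL3R. coset g \<in> \<Union>K} = (\<Union>U\<in>K. {g \<in> SL3R. coset g \<in> U})" by auto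
  moreover have "openin (top_of_set SL3R) (\<Union>U\<in>K. {g \<in> SL3R. coset g \<in> U})"
    using H by (intro openin_Union) auto
  ultimately show "\<Union>K \<subseteq> Xspace \<and> openin (top_of_set SL3R) {g \<in> SL3R. coset g \<in> \<Union>K}" using H by auto
qed

definition act :: "mat3 \<Rightarrow> mat3 set \<Rightarrow> mat3 set" where
  "act a x = (\<Union>h\<in>x. {a ** h})"

definition a_st :: "real \<Rightarrow> real \<Rightarrow> mat3" where
  "a_st s t = vector [vector [exp (-s-t), 0, 0], vector [0, exp s, 0], vector [0, 0, exp t]]"

definition tau :: "real \<Rightarrow> real \<Rightarrow> mat3" where
  "tau \<alpha> \<beta> = vector [vector [1, 0, 0], vector [\<alpha>, 1, 0], vector [\<beta>, 0, 1]]"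

definition emp_measure :: "real \<Rightarrow> mat3 set \<Rightarrow> mat3 set set \<Rightarrow> real" where
  "emp_measure T x K =
     measure lborel {p :: real \<times> real. p \<in> {0..T} \<times> {0..T} \<and> act (a_st (fst p) (snd p)) x \<in> K} / T^2"

definition dni :: "real \<Rightarrow> real" where
  "dni x = \<bar>x - of_int (round x)\<bar>"

end

theory Submission
  imports Defs
begin


definition intv :: "real^3 \<Rightarrow> bool" where "intv u \<longleftrightarrow> (\<forall>i. u$i \<in> \<int>)"

lemma countable_test: "countable (UNIV :: (3 \<Rightarrow> 3 \<Rightarrow> int) set)" by simp

lemma fin_int_pts: "finite {u::real^3. intv u \<and> norm u \<le> r}"
proof -
  define S where "S = {-ceiling r..ceiling r}"
  have "{u::real^3. intv u \<and> norm u \<le> r} \<subseteq> (\<lambda>f. \<chi> i. real_of_int (f i)) ` (Pi\<^sub>E UNIV (\<lambda>_. S))"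
  proof
    fix u :: "real^3" assume u: "u \<in> {u::real^3. intv u \<and> norm u \<le> r}"
    define f where "f = (\<lambda>i. floor (u$i))"
    have ui: "u$i = of_int (f i)" for i using u unfolding intv_def f_def by (auto elim: Ints_cases)
    have ur: "\<bar>u$i\<bar> \<le> r" for i using u component_le_norm_cart[of u i] by auto
    then have "real_of_int (f i) \<le> real_of_int \<lceil>r\<rceil> \<and> real_of_int (-\<lceil>r\<rceil>) \<le> real_of_int (f i)" for i
      proof -
      have "\<bar>real_of_int (f i)\<bar> \<le> r" using ui[of i] ur[of i] by simp
      then have "real_of_int (f i) \<le> r" "- real_of_int (f i) \<le> r" by auto
      moreover have "r \<le> real_of_int \<lceil>r\<rceil>" by (rule le_of_int_ceiling)
      ultimately have h1: "real_of_int (f i) \<le> real_of_int \<lceil>r\<rceil>" and h2: "- real_of_int (\<lceil>r\<rceil>) \<le> real_of_int (f i)"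
        by linarith+
      show ?thesis using h1 h2 by simp
    qed
    then have "f i \<in> S" for i unfolding S_def by (simp only: of_int_le_iff) auto
    moreover have "u = (\<chi> i. real_of_int (f i))" using ui by (simp add: vec_eq_iff)
    ultimately show "u \<in> (\<lambda>f. \<chi> i. real_of_int (f i)) ` (Pi\<^sub>E UNIV (\<lambda>_. S))" by auto
  qed
  moreover have "finite (Pi\<^sub>E (UNIV::3 set) (\<lambda>_. S))" unfolding S_def by (intro finite_PiE) auto
  ultimately show ?thesis using finite_subset by blast
qed

lemma fin_vals:
  assumes "\<And>t. t \<in> S \<Longrightarrow> intv (w t) \<and> f t = \<phi> (w t) \<and> norm (w t) \<le> K * f t" and "K \<ge> 0"
  shows "finite {f t |t. t \<in> S \<and> f t \<le> c}"
proof -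
  have "{f t |t. t \<in> S \<and> f t \<le> c} \<subseteq> \<phi> ` {u. intv u \<and> norm u \<le> K * c}"
  proof
    fix y assume "y \<in> {f t |t. t \<in> S \<and> f t \<le> c}"
    then obtain t where t: "t \<in> S" "f t \<le> c" "y = f t" by auto
    have "norm (w t) \<le> K * c" using assms(1)[OF t(1)] mult_left_mono[OF t(2) assms(2)] by linarith
    then show "y \<in> \<phi> ` {u. intv u \<and> norm u \<le> K * c}" using assms(1)[OF t(1)] t by auto
  qed
  then show ?thesis using fin_int_pts finite_subset by blast
qed

lemma min_exists:
  fixes f :: "'a \<Rightarrow> real"
  assumes "S \<noteq> {}" and "\<And>c. finite {f t |t. t \<in> S \<and> f t \<le> c}"
  shows "\<exists>x\<in>S. \<forall>y\<in>S. f x \<le> f y"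
proof -
  obtain x0 where x0: "x0 \<in> S" using assms by auto
  define V where "V = {f t |t. t \<in> S \<and> f t \<le> f x0}"
  have fV: "finite V" "V \<noteq> {}" using assms(2) x0 unfolding V_def by auto
  then have "Min V \<in> V" by simp
  then obtain x where x: "x \<in> S" "f x = Min V" "f x \<le> f x0" unfolding V_def by auto
  have fy: "f x \<le> f y" if "y \<in> S" for y
  proof (cases "f y \<le> f x0")
    case True then have "f y \<in> V" using that unfolding V_def by auto
    then show ?thesis using x fV by simp
  next
    case False then show ?thesis using x by simp
  qed
  show ?thesis using x(1) fy by blast
qed



lemma tp_mult: "(M *v x) \<bullet> cross3 (M *v y) (M *v z) = det M * (x \<bullet> cross3 y z)"
proof -
  have "(M *v x) \<bullet> w = x \<bullet> (transpose M *v w)" for w :: "real^3"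
    by (simp add: inner_vec_def matrix_vector_mult_def transpose_def sum_3 algebra_simps)
  then show ?thesis using cross_matrix_mult[of M y z] by simp
qed

lemma tp_swap12: "y \<bullet> cross3 x z = - (x \<bullet> cross3 y z)"
  by (simp add: cross3_simps)
lemma tp_rot: "x \<bullet> cross3 z y = - (x \<bullet> cross3 y z)"
  by (simp add: cross3_simps)

lemma decomp:
  fixes b1 b2 b3 :: "real^3"
  defines "n \<equiv> cross3 b1 b2"
  shows "(n \<bullet> n) *\<^sub>R b3 = (b3 \<bullet> n) *\<^sub>R n + ((cross3 b3 b2) \<bullet> n) *\<^sub>R b1 + ((cross3 b1 b3) \<bullet> n) *\<^sub>R b2"
  unfolding n_def by (simp add: cross3_simps) (metis exhaust_3)

lemma cn: "cross3 (cross3 b1 b3) (cross3 b1 b2) = - ((b1 \<bullet> cross3 b2 b3) *\<^sub>R b1)"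
  by (simp add: cross3_simps) (metis exhaust_3)



lemma numeric_core:
  fixes a2 B2 d A2 \<delta> :: real
  assumes d0: "0<\<delta>" "\<delta> \<le> 1" and h1: "\<delta>^2 \<le> a2" and h2: "a2 \<le> B2" and h3: "2*\<bar>d\<bar> \<le> a2"
    and h4: "A2 = a2*B2 - d^2" and h5: "3/4 * A2^2 \<le> a2"
  shows "a2 \<le> 4/3" "A2 \<le> 4/3" "B2 \<le> 4/(3*\<delta>^2) + 1/3" "1/A2 \<le> 4/(3*\<delta>^4)" "A2 > 0"
proof -
  have a2p: "a2 > 0" using h1 d0 by (smt (verit) zero_less_power)
  have dd: "d^2 \<le> a2^2/4" proof -
    have "\<bar>d\<bar> \<le> a2/2" using h3 by simp
    then have "\<bar>d\<bar>^2 \<le> (a2/2)^2" by (rule power_mono) simp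
    then show ?thesis by (simp add: power_divide)
  qed
  have "a2*a2 \<le> a2*B2" using h2 a2p by (intro mult_left_mono) auto
  then have A2l: "A2 \<ge> 3/4 * a2^2" using h4 dd by (simp add: power2_eq_square)
  have "0 < a2^2" using a2p by simp
  then show A2p: "A2 > 0" using A2l by linarith
  have "(3/4*a2^2)^2 \<le> A2^2" using A2l a2p by (intro power_mono) auto
  then have "3/4 * (3/4*a2^2)^2 \<le> a2" using h5 by linarith
  then have "27/64 * a2^3 * a2 \<le> 1 * a2" by (simp add: power2_eq_square power3_eq_cube algebra_simps)
  then have c: "27/64 * a2^3 \<le> 1" using a2p by (meson mult_le_cancel_right_pos)
  show a2b: "a2 \<le> 4/3"
  proof (rule ccontr)
    assume "\<not> a2 \<le> 4/3"
    then have "(4/3)^3 < a2^3" by (intro power_strict_mono) auto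
    moreover have "(4/3::real)^3 = 64/27" by (simp add: power3_eq_cube)
    ultimately show False using c by linarith
  qed
  have "3/4 * A2^2 \<le> 4/3" using h5 a2b by linarith
  then have "A2^2 \<le> (4/3)^2" by (simp add: power2_eq_square)
  then show A2b: "A2 \<le> 4/3" by (rule power2_le_imp_le) simp
  have "B2 = (A2 + d^2)/a2" using h4 a2p by (simp add: field_simps)
  also have "\<dots> \<le> (4/3 + a2^2/4)/a2" using A2b dd a2p by (intro divide_right_mono) auto
  also have "\<dots> = (4/3)/a2 + a2/4" using a2p by (simp add: field_simps power2_eq_square)
  also have "\<dots> \<le> (4/3)/\<delta>^2 + 1/3" using a2b h1 d0 a2p by (intro add_mono divide_left_mono) (auto intro!: mult_pos_pos)
  finally show "B2 \<le> 4/(3*\<delta>^2) + 1/3" by simp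
  have "\<delta>^4 = (\<delta>^2)^2" by simp
  also have "\<dots> \<le> a2^2" using h1 d0 by (intro power_mono) auto
  finally have "3/4*\<delta>^4 \<le> A2" using A2l by linarith
  then have "1/A2 \<le> 1/(3/4*\<delta>^4)" using d0 A2p by (intro divide_left_mono) (auto intro!: mult_pos_pos)
  then show "1/A2 \<le> 4/(3*\<delta>^4)" by simp
qed



lemma tp_a: "x \<bullet> cross3 (y + k *\<^sub>R x) z = x \<bullet> cross3 y z"
  by (simp add: cross_add_left cross_mult_left inner_add_right dot_cross_self)
lemma tp_b: "x \<bullet> cross3 (z + l *\<^sub>R y) (-y) = x \<bullet> cross3 y z"
  by (simp add: cross_add_left cross_mult_left inner_add_right cross_skew[of z y])
lemma tp_c: "x \<bullet> cross3 y (z + k *\<^sub>R x + l *\<^sub>R y) = x \<bullet> cross3 y z"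
  by (simp add: cross_add_right cross_mult_right inner_add_right dot_cross_self)
lemma tp_d: "y \<bullet> cross3 (-x) z = x \<bullet> cross3 y z"
  by (simp add: cross3_simps)


lemma intv_cross: "intv u \<Longrightarrow> intv v \<Longrightarrow> intv (cross3 u v)"
  unfolding intv_def by (auto simp: cross_components forall_3)
lemma intv_add: "intv u \<Longrightarrow> intv v \<Longrightarrow> intv (u + v)"
  unfolding intv_def by auto
lemma intv_minus: "intv u \<Longrightarrow> intv (- u)"
  unfolding intv_def by auto
lemma intv_scale: "k \<in> \<int> \<Longrightarrow> intv u \<Longrightarrow> intv (k *\<^sub>R u)"
  unfolding intv_def by auto

lemma inv_bound:
  fixes M :: "real^3^3"
  assumes "det M \<noteq> 0"
  shows "\<exists>K>0. \<exists>N. (\<forall>v. norm (N *v v) \<le> norm v * K) \<and> (\<forall>u. N *v (M *v u) = u) \<and> (\<forall>u. M *v (N *v u) = u)"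
proof -
  have "invertible M" using assms by (simp add: invertible_det_nz)
  then obtain N where N: "M ** N = mat 1" "N ** M = mat 1" unfolding invertible_def by auto
  obtain K where "K > 0" "\<forall>v. norm (N *v v) \<le> norm v * K"
    using bounded_linear.pos_bounded[OF matrix_vector_mul_bounded_linear[of N]] by auto
  moreover have "N *v (M *v u) = u" "M *v (N *v u) = u" for u
    using N by (simp_all add: matrix_vector_mul_assoc)
  ultimately show ?thesis by blast
qed


lemma mahler:
  fixes M :: "real^3^3" and \<delta> :: real
  assumes detM: "det M = 1" and d0: "0 < \<delta>" "\<delta> \<le> 1"
    and short: "\<And>u. intv u \<Longrightarrow> u \<noteq> 0 \<Longrightarrow> \<delta> \<le> norm (M *v u)"
  shows "\<exists>u1 u2 u3. intv u1 \<and> intv u2 \<and> intv u3 \<and> u1 \<bullet> cross3 u2 u3 = 1 \<and>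
           norm (M *v u1) \<le> 3/\<delta>^2 \<and> norm (M *v u2) \<le> 3/\<delta>^2 \<and> norm (M *v u3) \<le> 3/\<delta>^2"
proof -
  define Tr :: "((real^3) \<times> (real^3) \<times> (real^3)) set" where
    "Tr = {(u1,u2,u3). intv u1 \<and> intv u2 \<and> intv u3 \<and> u1 \<bullet> cross3 u2 u3 = 1}"
  define f1 :: "(real^3) \<times> (real^3) \<times> (real^3) \<Rightarrow> real" where "f1 = (\<lambda>(u1,u2,u3). norm (M *v u1))"
  define f2 :: "(real^3) \<times> (real^3) \<times> (real^3) \<Rightarrow> real" where "f2 = (\<lambda>(u1,u2,u3). norm (cross3 (M *v u1) (M *v u2)))"
  define f3 :: "(real^3) \<times> (real^3) \<times> (real^3) \<Rightarrow> real" where "f3 = (\<lambda>(u1,u2,u3). norm (M *v u2))"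
  define f4 :: "(real^3) \<times> (real^3) \<times> (real^3) \<Rightarrow> real" where "f4 = (\<lambda>(u1,u2,u3). norm (M *v u3))"
  obtain K N where K: "K > 0" "\<And>v. norm (N *v v) \<le> norm v * K" "\<And>u. N *v (M *v u) = u"
    using inv_bound[of M] detM by auto
  have dT: "det (transpose M) = 1" using detM by (simp add: det_transpose)
  obtain K2 N2 where K2: "K2 > 0" "\<And>v. norm (N2 *v v) \<le> norm v * K2" "\<And>u. N2 *v (transpose M *v u) = u"
    using inv_bound[of "transpose M"] dT by auto
  have nb: "norm u \<le> K * norm (M *v u)" for u
    using K(2)[of "M *v u"] K(3)[of u] by (simp add: mult.commute)
  have fin1: "finite {f1 t |t. t \<in> S \<and> f1 t \<le> c}" if "S \<subseteq> Tr" for S c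
    by (rule fin_vals[where w="\<lambda>(u1,u2,u3). u1" and \<phi>="\<lambda>u. norm (M *v u)" and K=K])
       (use that K nb in \<open>auto simp: Tr_def f1_def\<close>)
  have fin3: "finite {f3 t |t. t \<in> S \<and> f3 t \<le> c}" if "S \<subseteq> Tr" for S c
    by (rule fin_vals[where w="\<lambda>(u1,u2,u3). u2" and \<phi>="\<lambda>u. norm (M *v u)" and K=K])
       (use that K nb in \<open>auto simp: Tr_def f3_def\<close>)
  have fin4: "finite {f4 t |t. t \<in> S \<and> f4 t \<le> c}" if "S \<subseteq> Tr" for S c
    by (rule fin_vals[where w="\<lambda>(u1,u2,u3). u3" and \<phi>="\<lambda>u. norm (M *v u)" and K=K])
       (use that K nb in \<open>auto simp: Tr_def f4_def\<close>)
  have cm: "transpose M *v cross3 (M *v x) (M *v y) = cross3 x y" for x y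
    using cross_matrix_mult[of M x y] detM by simp
  obtain KT where KT: "KT > 0" "\<And>v. norm (transpose M *v v) \<le> norm v * KT"
    using bounded_linear.pos_bounded[OF matrix_vector_mul_bounded_linear[of "transpose M"]] by auto
  have fin2: "finite {f2 t |t. t \<in> S \<and> f2 t \<le> c}" if "S \<subseteq> Tr" for S c
  proof (rule fin_vals[where w="\<lambda>(u1,u2,u3). cross3 u1 u2" and \<phi>="\<lambda>u. norm (N2 *v u)" and K=KT])
    fix t assume "t \<in> S"
    then have "t \<in> Tr" using that by auto
    then obtain u1 u2 u3 where t: "t = (u1,u2,u3)" "intv u1" "intv u2" unfolding Tr_def by auto
    have e: "N2 *v cross3 u1 u2 = cross3 (M *v u1) (M *v u2)"
      using K2(3)[of "cross3 (M *v u1) (M *v u2)"] by (simp only: cm)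
    have "norm (cross3 u1 u2) \<le> norm (cross3 (M *v u1) (M *v u2)) * KT"
      using KT(2)[of "cross3 (M *v u1) (M *v u2)"] cm by simp
    then show "intv (case t of (u1, u2, u3) \<Rightarrow> cross3 u1 u2) \<and>
          f2 t = norm (N2 *v (case t of (u1, u2, u3) \<Rightarrow> cross3 u1 u2)) \<and>
          norm (case t of (u1, u2, u3) \<Rightarrow> cross3 u1 u2) \<le> KT * f2 t"
      using t e intv_cross by (simp add: f2_def mult.commute)
  qed (use KT in auto)
  have Tr_ne: "Tr \<noteq> {}"
  proof -
    have a1: "axis 1 1 \<bullet> cross3 (axis 2 1) (axis 3 1) = (1::real)" by (simp add: cross_basis inner_axis_axis)
    have a2: "intv (axis i 1)" for i unfolding intv_def axis_def by auto
    have "(axis 1 1, axis 2 1, axis 3 1) \<in> Tr"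
      unfolding Tr_def using a1 a2 by auto
    then show ?thesis by auto
  qed
  define S1 where "S1 = {t\<in>Tr. \<forall>t'\<in>Tr. f1 t \<le> f1 t'}"
  have S1_ne: "S1 \<noteq> {}"
  proof -
    obtain x where "x \<in> Tr" "\<forall>y\<in>Tr. f1 x \<le> f1 y" using min_exists[OF Tr_ne, of f1] fin1[of Tr] by blast
    then show ?thesis unfolding S1_def by blast
  qed
  have S1_sub: "S1 \<subseteq> Tr" unfolding S1_def by auto
  define S2 where "S2 = {t\<in>S1. \<forall>t'\<in>S1. f2 t \<le> f2 t'}"
  have S2_ne: "S2 \<noteq> {}"
  proof -
    obtain x where "x \<in> S1" "\<forall>y\<in>S1. f2 x \<le> f2 y" using min_exists[OF S1_ne, of f2] fin2[OF S1_sub] by blast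
    then show ?thesis unfolding S2_def by blast
  qed
  have S2_sub: "S2 \<subseteq> Tr" using S1_sub unfolding S2_def by auto
  define S3 where "S3 = {t\<in>S2. \<forall>t'\<in>S2. f3 t \<le> f3 t'}"
  have S3_ne: "S3 \<noteq> {}"
  proof -
    obtain x where "x \<in> S2" "\<forall>y\<in>S2. f3 x \<le> f3 y" using min_exists[OF S2_ne, of f3] fin3[OF S2_sub] by blast
    then show ?thesis unfolding S3_def by blast
  qed
  have S3_sub: "S3 \<subseteq> Tr" using S2_sub unfolding S3_def by auto
  define S4 where "S4 = {t\<in>S3. \<forall>t'\<in>S3. f4 t \<le> f4 t'}"
  have S4_ne: "S4 \<noteq> {}"
  proof -
    obtain x where "x \<in> S3" "\<forall>y\<in>S3. f4 x \<le> f4 y" using min_exists[OF S3_ne, of f4] fin4[OF S3_sub] by blast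
    then show ?thesis unfolding S4_def by blast
  qed
  then obtain u1 u2 u3 where t4: "(u1,u2,u3) \<in> S4" by auto
  then have t3: "(u1,u2,u3) \<in> S3" and t2: "(u1,u2,u3) \<in> S2" and t1: "(u1,u2,u3) \<in> S1" and t0: "(u1,u2,u3) \<in> Tr"
    unfolding S4_def S3_def S2_def S1_def by auto
  then have iu: "intv u1" "intv u2" "intv u3" and tp1: "u1 \<bullet> cross3 u2 u3 = 1" unfolding Tr_def by auto
  define b1 where "b1 = M *v u1"
  define b2 where "b2 = M *v u2"
  define b3 where "b3 = M *v u3"
  have btp: "b1 \<bullet> cross3 b2 b3 = 1" unfolding b1_def b2_def b3_def using tp_mult[of M] detM tp1 by simp
  have f1t: "\<forall>t'\<in>Tr. norm b1 \<le> f1 t'" using t1 unfolding S1_def f1_def b1_def by auto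
  have f2t: "\<forall>t'\<in>S1. norm (cross3 b1 b2) \<le> f2 t'" using t2 unfolding S2_def f2_def b1_def b2_def by auto
  have f3t: "\<forall>t'\<in>S2. norm b2 \<le> f3 t'" using t3 unfolding S3_def f3_def b2_def by auto
  have f4t: "\<forall>t'\<in>S3. norm b3 \<le> f4 t'" using t4 unfolding S4_def f4_def b3_def by auto
  have u1nz: "u1 \<noteq> 0" using tp1 by auto
  have c1: "\<delta> \<le> norm b1" unfolding b1_def using short[OF iu(1) u1nz] .
  have Tr_iff: "(a,b,c) \<in> Tr \<longleftrightarrow> intv a \<and> intv b \<and> intv c \<and> a \<bullet> cross3 b c = 1" for a b c
    by (simp add: Tr_def)
  have inS1: "t \<in> S1" if "t \<in> Tr" "f1 t = f1 (u1,u2,u3)" for t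
  proof -
    have "\<forall>t'\<in>Tr. f1 t \<le> f1 t'" using t1 that(2) unfolding S1_def by simp
    then show ?thesis using that(1) unfolding S1_def by blast
  qed
  have inS2: "t \<in> S2" if "t \<in> S1" "f2 t = f2 (u1,u2,u3)" for t
  proof -
    have "\<forall>t'\<in>S1. f2 t \<le> f2 t'" using t2 that(2) unfolding S2_def by simp
    then show ?thesis using that(1) unfolding S2_def by blast
  qed
  have inS3: "t \<in> S3" if "t \<in> S2" "f3 t = f3 (u1,u2,u3)" for t
  proof -
    have "\<forall>t'\<in>S2. f3 t \<le> f3 t'" using t3 that(2) unfolding S3_def by simp
    then show ?thesis using that(1) unfolding S3_def by blast
  qed
  have c2: "norm b1 \<le> norm b2"
  proof -
    have "(u2, -u1, u3) \<in> Tr" unfolding Tr_iff using iu tp1 by (simp add: intv_minus tp_swap12[of u1 u2 u3])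
    then have "norm b1 \<le> f1 (u2, -u1, u3)" using f1t by blast
    then show ?thesis unfolding f1_def b2_def by simp
  qed
  have c3: "norm b2 \<le> norm (b2 + k *\<^sub>R b1)" if "k \<in> \<int>" for k
  proof -
    let ?t = "(u1, u2 + k *\<^sub>R u1, u3)"
    have "?t \<in> Tr" unfolding Tr_iff using iu tp1 that by (simp add: intv_add intv_scale tp_a)
    moreover have "f1 ?t = f1 (u1,u2,u3)" unfolding f1_def by simp
    ultimately have "?t \<in> S1" by (rule inS1)
    moreover have "f2 ?t = f2 (u1,u2,u3)" unfolding f2_def
      by (simp add: vec.add matrix_vector_mult_scaleR cross_add_right cross_mult_right)
    ultimately have "?t \<in> S2" by (rule inS2)
    then have "norm b2 \<le> f3 ?t" using f3t by blast
    then show ?thesis unfolding f3_def b1_def b2_def by (simp add: vec.add matrix_vector_mult_scaleR)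
  qed
  have c4: "norm (cross3 b1 b2) \<le> norm (cross3 b1 (b3 + l *\<^sub>R b2))" if "l \<in> \<int>" for l
  proof -
    let ?t = "(u1, u3 + l *\<^sub>R u2, -u2)"
    have "?t \<in> Tr" unfolding Tr_iff using iu that tp_b[of u1 u3 l u2] tp1 by (simp add: intv_add intv_scale intv_minus)
    moreover have "f1 ?t = f1 (u1,u2,u3)" unfolding f1_def by simp
    ultimately have "?t \<in> S1" by (rule inS1)
    then have "norm (cross3 b1 b2) \<le> f2 ?t" using f2t by blast
    then show ?thesis unfolding f2_def b1_def b2_def b3_def by (simp add: vec.add matrix_vector_mult_scaleR)
  qed
  have c5: "norm b3 \<le> norm (b3 + k *\<^sub>R b1 + l *\<^sub>R b2)" if "k \<in> \<int>" "l \<in> \<int>" for k l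
  proof -
    let ?t = "(u1, u2, u3 + k *\<^sub>R u1 + l *\<^sub>R u2)"
    have "?t \<in> Tr" unfolding Tr_iff using iu that tp_c[of u1 u2 u3 k l] tp1 by (simp add: intv_add intv_scale)
    moreover have "f1 ?t = f1 (u1,u2,u3)" unfolding f1_def by simp
    ultimately have "?t \<in> S1" by (rule inS1)
    moreover have "f2 ?t = f2 (u1,u2,u3)" unfolding f2_def by simp
    ultimately have "?t \<in> S2" by (rule inS2)
    moreover have "f3 ?t = f3 (u1,u2,u3)" unfolding f3_def by simp
    ultimately have "?t \<in> S3" by (rule inS3)
    then have "norm b3 \<le> f4 ?t" using f4t by blast
    then show ?thesis unfolding f4_def b1_def b2_def b3_def by (simp add: vec.add matrix_vector_mult_scaleR)
  qed
  define n where "n = cross3 b1 b2"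
  define a2 where "a2 = (norm b1)^2"
  define B2 where "B2 = (norm b2)^2"
  define A2 where "A2 = (norm n)^2"
  define d where "d = b1 \<bullet> b2"
  have h1: "\<delta>^2 \<le> a2" unfolding a2_def using c1 d0 by (intro power_mono) auto
  have h2: "a2 \<le> B2" unfolding a2_def B2_def using c2 by (intro power_mono) auto
  have sq: "(norm (b2 + k *\<^sub>R b1))^2 = B2 + 2*k*d + k^2*a2" for k
    unfolding B2_def a2_def d_def power2_norm_eq_inner
    by (simp add: inner_add_left inner_add_right inner_commute algebra_simps power2_eq_square)
  have "(norm b2)^2 \<le> (norm (b2 + k *\<^sub>R b1))^2" if "k \<in> \<int>" for k
    using c3[OF that] by (intro power_mono) auto
  from this[of 1] this[of "-1"] have h3: "2*\<bar>d\<bar> \<le> a2" unfolding sq B2_def[symmetric] by auto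
  have h4: "A2 = a2*B2 - d^2" unfolding A2_def a2_def B2_def d_def n_def using norm_cross[of b1 b2] by (simp add: power_mult_distrib)
  have nb3: "n \<bullet> b3 = 1" unfolding n_def using btp cross_triple[of b1 b2 b3] by (simp add: inner_commute)
  then have "n \<noteq> 0" by auto
  then have A2p: "A2 > 0" unfolding A2_def by simp
  define c where "c = cross3 b1 b3"
  define e where "e = c \<bullet> n"
  have "cross3 c n = - b1" unfolding c_def n_def using cn[of b1 b3 b2] btp by simp
  then have ce: "(norm c)^2 * A2 - e^2 = a2" unfolding A2_def e_def a2_def using norm_cross[of c n] by simp
  have cl: "(norm (c + l *\<^sub>R n))^2 = (norm c)^2 + 2*l*e + l^2*A2" for l
    unfolding A2_def e_def power2_norm_eq_inner
    by (simp add: inner_add_left inner_add_right inner_commute algebra_simps power2_eq_square)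
  have h5: "3/4 * A2^2 \<le> a2"
  proof -
    define l where "l = - real_of_int (round (e/A2))"
    have lZ: "l \<in> \<int>" unfolding l_def by simp
    define x where "x = e/A2 + l"
    have x2: "\<bar>x\<bar> \<le> 1/2" unfolding x_def l_def using of_int_round_abs_le[of "e/A2"] by linarith
    have "x^2 \<le> (1/2)^2" using x2 by (metis abs_ge_zero power2_abs power_mono)
    then have x2': "x^2 \<le> 1/4" by (simp add: power2_eq_square)
    have "cross3 b1 (b3 + l *\<^sub>R b2) = c + l *\<^sub>R n" unfolding c_def n_def by (simp add: cross_add_right cross_mult_right)
    then have "norm n \<le> norm (c + l *\<^sub>R n)" using c4[OF lZ] n_def by simp
    then have "A2 \<le> (norm (c + l *\<^sub>R n))^2" unfolding A2_def by (intro power_mono) auto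
    also have "\<dots> = (norm c)^2 + 2*l*e + l^2*A2" by (rule cl)
    also have "\<dots> = a2/A2 + A2 * x^2" unfolding ce[symmetric] x_def using A2p
      by (simp add: field_simps power2_eq_square)
    also have "\<dots> \<le> a2/A2 + A2 * (1/4)" using x2' A2p by (intro add_left_mono mult_left_mono) auto
    finally have "A2 * A2 \<le> (a2/A2 + A2/4) * A2" using A2p by (intro mult_right_mono) auto
    then show ?thesis using A2p by (simp add: field_simps power2_eq_square)
  qed
  note core = numeric_core[OF d0 h1 h2 h3 h4 h5]
  have b3b: "(norm b3)^2 \<le> 3 * (1/A2 + a2/4 + B2/4)"
  proof -
    have dc: "A2 *\<^sub>R b3 = n + ((cross3 b3 b2) \<bullet> n) *\<^sub>R b1 + e *\<^sub>R b2"
      using decomp[of b1 b2 b3] nb3 unfolding A2_def e_def c_def n_def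
      by (simp add: power2_norm_eq_inner inner_commute)
    define x where "x = ((cross3 b3 b2) \<bullet> n)/A2"
    define y where "y = e/A2"
    define k where "k = - real_of_int (round x)"
    define l where "l = - real_of_int (round y)"
    have b3e: "b3 = (1/A2) *\<^sub>R n + x *\<^sub>R b1 + y *\<^sub>R b2"
    proof -
      have "b3 = (1/A2) *\<^sub>R (A2 *\<^sub>R b3)" using A2p by simp
      also have "\<dots> = (1/A2) *\<^sub>R n + x *\<^sub>R b1 + y *\<^sub>R b2" unfolding dc x_def y_def
        by (simp add: scaleR_add_right)
      finally show ?thesis .
    qed
    have eqb: "b3 + k *\<^sub>R b1 + l *\<^sub>R b2 = (1/A2) *\<^sub>R n + (x + k) *\<^sub>R b1 + (y + l) *\<^sub>R b2"
      by (subst b3e) (simp add: algebra_simps)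
    have "norm (b3 + k *\<^sub>R b1 + l *\<^sub>R b2) \<le> norm ((1/A2) *\<^sub>R n) + norm ((x + k) *\<^sub>R b1) + norm ((y + l) *\<^sub>R b2)"
      unfolding eqb by (rule order_trans[OF norm_triangle_ineq add_right_mono[OF norm_triangle_ineq]])
    also have "\<dots> = norm n / A2 + \<bar>x+k\<bar> * norm b1 + \<bar>y+l\<bar> * norm b2" using A2p by simp
    also have "\<dots> \<le> norm n / A2 + 1/2 * norm b1 + 1/2 * norm b2"
    proof -
      have "\<bar>x+k\<bar> \<le> 1/2" "\<bar>y+l\<bar> \<le> 1/2" unfolding k_def l_def
        using of_int_round_abs_le[of x] of_int_round_abs_le[of y] by linarith+
      then show ?thesis by (intro add_mono mult_right_mono) auto
    qed
    finally have n3: "norm b3 \<le> norm n / A2 + 1/2 * norm b1 + 1/2 * norm b2"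
      using c5[of k l] unfolding k_def l_def by auto
    define P where "P = norm n / A2"
    define Q where "Q = 1/2 * norm b1"
    define R where "R = 1/2 * norm b2"
    have "(norm b3)^2 \<le> (P + Q + R)^2" using n3 unfolding P_def Q_def R_def by (intro power_mono) auto
    also have "\<dots> \<le> 3 * (P^2 + Q^2 + R^2)"
    proof -
      have "3 * (P^2 + Q^2 + R^2) - (P + Q + R)^2 = (P-Q)^2 + (Q-R)^2 + (P-R)^2"
        by (simp add: power2_eq_square algebra_simps)
      moreover have "0 \<le> (P-Q)^2 + (Q-R)^2 + (P-R)^2" by simp
      ultimately show ?thesis by linarith
    qed
    also have "P^2 = 1/A2" unfolding P_def A2_def using A2p unfolding A2_def
      by (simp add: power2_eq_square field_simps)
    also have "Q^2 = a2/4" unfolding Q_def a2_def by (simp add: power2_eq_square)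
    also have "R^2 = B2/4" unfolding R_def B2_def by (simp add: power2_eq_square)
    finally show ?thesis .
  qed
  define D where "D = 1/\<delta>^2"
  have D1: "1 \<le> D" unfolding D_def using d0 by (simp add: power_le_one)
  have D2: "1/\<delta>^4 = D^2" unfolding D_def by (simp add: power2_eq_square power4_eq_xxxx)
  have DD1: "1 \<le> D^2" using D1 by (rule one_le_power)
  have "D * 1 \<le> D * D" using D1 by (intro mult_left_mono) auto
  then have DD2: "D \<le> D^2" by (simp add: power2_eq_square)
  note DD = DD1 DD2
  have e1: "4/(3*\<delta>^2) = 4/3 * D" unfolding D_def by simp
  have e2: "4/(3*\<delta>^4) = 4/3 * D^2" unfolding D2[symmetric] by simp
  have D0: "0 \<le> 3*D" using D1 by simp
  have sqD: "(3*D)^2 = 9*D^2" by (simp add: power_mult_distrib)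
  have "(norm b1)^2 \<le> (3*D)^2" unfolding sqD a2_def[symmetric] using core(1) DD by linarith
  then have nb1: "norm b1 \<le> 3*D" using D0 by (rule power2_le_imp_le)
  have "(norm b2)^2 \<le> (3*D)^2" unfolding sqD B2_def[symmetric] using core(3) DD e1 by linarith
  then have nb2: "norm b2 \<le> 3*D" using D0 by (rule power2_le_imp_le)
  have H: "w \<le> 9*D^2" if "w \<le> 3*(x + y/4 + z/4)" "y \<le> 4/3" "z \<le> 4/3*D + 1/3" "x \<le> 4/3*D^2" for x y z w :: real
    using that DD by (simp add: field_simps)
  have "(norm b3)^2 \<le> (3*D)^2" unfolding sqD
    by (rule H[OF b3b core(1)]) (use core(3) core(4) e1 e2 in auto)
  then have nb3': "norm b3 \<le> 3*D" using D0 by (rule power2_le_imp_le)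
  have "3*D = 3/\<delta>^2" unfolding D_def by simp
  then show ?thesis using iu tp1 nb1 nb2 nb3' unfolding b1_def b2_def b3_def by metis
qed


definition mk :: "real^3 \<Rightarrow> real^3 \<Rightarrow> real^3 \<Rightarrow> real^3^3" where
  "mk a b c = transpose (vector [a,b,c])"

lemma det_mk: "det (mk a b c) = a \<bullet> cross3 b c"
  unfolding mk_def by (simp add: det_transpose dot_cross_det)

lemma mult_mk: "(A ** mk a b c) $ i $ j = A $ i \<bullet> (vector [a,b,c] $ j)"
  unfolding mk_def by (simp add: matrix_matrix_mult_def transpose_def inner_vec_def)

lemma mk_entry: "mk a b c $ i $ j = (vector [a,b,c] $ j) $ i"
  unfolding mk_def by (simp add: transpose_def)

lemma vec3_cases: "(vector [a,b,c] :: ('a::zero)^3) $ j \<in> {a,b,c}"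
  using exhaust_3[of j] by auto

lemma mk_int: "intv a \<Longrightarrow> intv b \<Longrightarrow> intv c \<Longrightarrow> mk a b c $ i $ j \<in> \<int>"
proof -
  assume "intv a" "intv b" "intv c"
  moreover have "vector [a,b,c] $ j \<in> {a,b,c}" by (rule vec3_cases)
  ultimately have "intv (vector [a,b,c] $ j)" by auto
  then show ?thesis unfolding mk_entry intv_def by auto
qed

lemma mk_SL3Z: "intv a \<Longrightarrow> intv b \<Longrightarrow> intv c \<Longrightarrow> a \<bullet> cross3 b c = 1 \<Longrightarrow> mk a b c \<in> SL3Z"
  unfolding SL3Z_def using mk_int by (auto simp: det_mk)

lemma tp_cyc1: "y \<bullet> cross3 z x = x \<bullet> cross3 y z"
  by (simp add: cross3_simps)
lemma tp_cyc2: "z \<bullet> cross3 x y = x \<bullet> cross3 y z"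
  by (simp add: cross3_simps)

lemma rows_eq: "(A :: real^3^3) = vector [A$1, A$2, A$3]"
  by (simp add: vec_eq_iff forall_3)

lemma SL3Z_inv:
  assumes "U \<in> SL3Z"
  shows "\<exists>V\<in>SL3Z. U ** V = mat 1 \<and> V ** U = mat 1"
proof -
  let ?r1 = "U$1" and ?r2 = "U$2" and ?r3 = "U$3"
  have iv: "intv (U$i)" for i using assms unfolding SL3Z_def intv_def by auto
  have d: "?r1 \<bullet> cross3 ?r2 ?r3 = 1"
    using assms unfolding SL3Z_def by (simp add: dot_cross_det rows_eq[symmetric])
  define V where "V = mk (cross3 ?r2 ?r3) (cross3 ?r3 ?r1) (cross3 ?r1 ?r2)"
  have UV: "U ** V = mat 1"
  proof -
    have "(U ** V) $ i $ j = mat 1 $ i $ j" for i j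
      unfolding V_def mult_mk mat_def
      using exhaust_3[of i] exhaust_3[of j] d tp_cyc1[of "U$2" "U$3" "U$1"] tp_cyc2[of "U$3" "U$1" "U$2"]
      by (auto simp: dot_cross_self cross_triple[symmetric] inner_commute)
    then show ?thesis by (simp add: vec_eq_iff)
  qed
  then have VU: "V ** U = mat 1" by (rule matrix_left_right_inverse1)
  have "det U * det V = 1" using UV by (metis det_mul det_I)
  then have dV: "det V = 1" using assms unfolding SL3Z_def by simp
  have "V $ i $ j \<in> \<int>" for i j
    unfolding V_def by (intro mk_int intv_cross iv)
  then have "V \<in> SL3Z" using dV unfolding SL3Z_def by auto
  then show ?thesis using UV VU by auto
qed

lemma SL3Z_mult: "U \<in> SL3Z \<Longrightarrow> V \<in> SL3Z \<Longrightarrow> U ** V \<in> SL3Z"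
proof -
  assume "U \<in> SL3Z" "V \<in> SL3Z"
  then have "det (U ** V) = 1" "\<forall>i j. U $ i $ j \<in> \<int>" "\<forall>i j. V $ i $ j \<in> \<int>"
    unfolding SL3Z_def by (auto simp: det_mul)
  moreover have "\<forall>i j. (U ** V) $ i $ j \<in> \<int>" using calculation(2,3)
    by (auto simp: matrix_matrix_mult_def intro!: Ints_sum Ints_mult)
  ultimately show ?thesis unfolding SL3Z_def by auto
qed

lemma SL3Z_one: "mat 1 \<in> SL3Z"
  unfolding SL3Z_def using det_I[where 'a=real and 'n=3] by (auto simp: mat_def)

lemma coset_self: "g \<in> coset g"
  unfolding coset_def using SL3Z_one by (metis image_eqI matrix_mul_rid)

lemma coset_mult: "U \<in> SL3Z \<Longrightarrow> coset (g ** U) = coset g"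
proof -
  assume U: "U \<in> SL3Z"
  obtain V where V: "V \<in> SL3Z" "U ** V = mat 1" using SL3Z_inv[OF U] by auto
  show ?thesis
  proof
    show "coset (g ** U) \<subseteq> coset g" unfolding coset_def
    proof
      fix x assume "x \<in> (**) (g ** U) ` SL3Z"
      then obtain W where W: "W \<in> SL3Z" "x = (g ** U) ** W" by auto
      then have "x = g ** (U ** W)" by (simp add: matrix_mul_assoc)
      then show "x \<in> (**) g ` SL3Z" using SL3Z_mult[OF U W(1)] by auto
    qed
  next
    show "coset g \<subseteq> coset (g ** U)" unfolding coset_def
    proof
      fix x assume "x \<in> (**) g ` SL3Z"
      then obtain W where W: "W \<in> SL3Z" "x = g ** W" by auto
      have "x = (g ** U) ** (V ** W)" using W V by (simp add: matrix_mul_assoc[symmetric] matrix_mul_assoc)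
      then show "x \<in> (**) (g ** U) ` SL3Z" using SL3Z_mult[OF V(1) W(1)] by auto
    qed
  qed
qed

lemma act_coset: "act a (coset g) = coset (a ** g)"
  unfolding act_def coset_def by (auto simp: matrix_mul_assoc)

lemma coset_in_image: "coset g \<in> coset ` C \<longleftrightarrow> (\<exists>U\<in>SL3Z. g ** U \<in> C)"
proof
  assume "coset g \<in> coset ` C"
  then obtain c where c: "c \<in> C" "coset g = coset c" by auto
  then have "c \<in> coset g" using coset_self by auto
  then obtain U where "U \<in> SL3Z" "c = g ** U" unfolding coset_def by auto
  then show "\<exists>U\<in>SL3Z. g ** U \<in> C" using c by auto
next
  assume "\<exists>U\<in>SL3Z. g ** U \<in> C"
  then obtain U where "U \<in> SL3Z" "g ** U \<in> C" by auto
  then show "coset g \<in> coset ` C" using coset_mult by (metis image_eqI)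
qed


definition Cset :: "real \<Rightarrow> mat3 set" where
  "Cset R = {h. det h = 1 \<and> (\<forall>i j. \<bar>h$i$j\<bar> \<le> R)}"

lemma row_dot: "(M :: real^3^3) $ i \<bullet> v = (M *v v) $ i"
  by (simp add: matrix_vector_mult_def inner_vec_def)

lemma mahler_mat:
  fixes M :: "real^3^3" and \<delta> :: real
  assumes detM: "det M = 1" and d0: "0 < \<delta>" "\<delta> \<le> 1"
    and short: "\<And>u. intv u \<Longrightarrow> u \<noteq> 0 \<Longrightarrow> \<delta> \<le> norm (M *v u)"
  shows "\<exists>U\<in>SL3Z. M ** U \<in> Cset (3/\<delta>^2)"
proof -
  obtain u1 u2 u3 where u: "intv u1" "intv u2" "intv u3" "u1 \<bullet> cross3 u2 u3 = 1"
    and b: "norm (M *v u1) \<le> 3/\<delta>^2" "norm (M *v u2) \<le> 3/\<delta>^2" "norm (M *v u3) \<le> 3/\<delta>^2"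
    using mahler[OF detM d0 short] by blast
  define U where "U = mk u1 u2 u3"
  have U: "U \<in> SL3Z" unfolding U_def using mk_SL3Z u by blast
  have "det (M ** U) = 1" using U detM unfolding SL3Z_def by (simp add: det_mul)
  moreover have "\<bar>(M ** U)$i$j\<bar> \<le> 3/\<delta>^2" for i j
  proof -
    have "vector [u1,u2,u3] $ j \<in> {u1,u2,u3}" by (rule vec3_cases)
    then have "norm (M *v (vector [u1,u2,u3] $ j)) \<le> 3/\<delta>^2" using b by auto
    moreover have "(M ** U)$i$j = (M *v (vector [u1,u2,u3] $ j)) $ i" unfolding U_def mult_mk row_dot ..
    moreover have "\<bar>(M *v (vector [u1,u2,u3] $ j)) $ i\<bar> \<le> norm (M *v (vector [u1,u2,u3] $ j))"
      by (rule component_le_norm_cart)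
    ultimately show ?thesis by linarith
  qed
  ultimately show ?thesis using U unfolding Cset_def by auto
qed

lemma Cset_sub: "Cset R \<subseteq> SL3R"
  unfolding Cset_def SL3R_def by auto

lemma det_cont: "continuous_on UNIV (det :: mat3 \<Rightarrow> real)"
  unfolding det_3 by (intro continuous_intros)

lemma compact_Cset: "compact (Cset R)"
proof -
  have cl: "closed (Cset R)"
  proof -
    have "Cset R = {h. det h = 1} \<inter> (\<Inter>i. \<Inter>j. {h::real^3^3. \<bar>h$i$j\<bar> \<le> R})"
      unfolding Cset_def by auto
    moreover have "closed {h::real^3^3. det h = 1}"
      by (intro closed_Collect_eq det_cont continuous_intros)
    moreover have "closed {h::real^3^3. \<bar>h$i$j\<bar> \<le> R}" for i j
      by (intro closed_Collect_le continuous_intros)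
    ultimately show ?thesis by (auto intro!: closed_Int closed_INT)
  qed
  have "bounded (Cset R)"
  proof -
    have "norm h \<le> 9 * R" if "h \<in> Cset R" for h
    proof -
      have "norm h \<le> (\<Sum>i\<in>UNIV. norm (h$i))" unfolding norm_vec_def by (rule L2_set_le_sum) simp
      also have "\<dots> \<le> (\<Sum>i\<in>(UNIV::3 set). 3 * R)"
      proof (rule sum_mono)
        fix i
        have "norm (h$i) \<le> (\<Sum>j\<in>UNIV. \<bar>h$i$j\<bar>)" by (rule norm_le_l1_cart)
        also have "\<dots> \<le> (\<Sum>j\<in>(UNIV::3 set). R)" using that unfolding Cset_def by (intro sum_mono) auto
        finally show "norm (h$i) \<le> 3 * R" by simp
      qed
      finally show ?thesis by simp
    qed
    then show ?thesis unfolding bounded_iff by blast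
  qed
  then show ?thesis using cl by (simp add: compact_eq_bounded_closed)
qed

lemma openin_X_top: "openin X_top U \<longleftrightarrow> U \<subseteq> Xspace \<and> openin (top_of_set SL3R) {g \<in> SL3R. coset g \<in> U}"
proof -
  have "openin X_top = (\<lambda>U. U \<subseteq> Xspace \<and> openin (top_of_set SL3R) {g \<in> SL3R. coset g \<in> U})"
    unfolding X_top_def by (rule topology_inverse'[OF istopology_X_top])
  then show ?thesis by simp
qed

lemma topspace_X_top: "topspace X_top = Xspace"
proof -
  have "{g \<in> SL3R. coset g \<in> coset ` SL3R} = topspace (top_of_set SL3R)" by auto
  then have "openin X_top Xspace" unfolding openin_X_top Xspace_def by (simp del: topspace_euclidean_subtopology)
  then have "Xspace \<subseteq> topspace X_top" by (rule openin_subset)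
  moreover have "topspace X_top \<subseteq> Xspace" unfolding topspace_def openin_X_top by auto
  ultimately show ?thesis by auto
qed

lemma coset_cont: "continuous_map (top_of_set SL3R) X_top coset"
  unfolding continuous_map_def topspace_X_top
proof (intro conjI allI impI)
  show "coset \<in> topspace (top_of_set SL3R) \<rightarrow> Xspace" unfolding Xspace_def by auto
  fix U assume "openin X_top U"
  then have "openin (top_of_set SL3R) {g \<in> SL3R. coset g \<in> U}" unfolding openin_X_top by auto
  then show "openin (top_of_set SL3R) {x \<in> topspace (top_of_set SL3R). coset x \<in> U}" by simp
qed

lemma compactin_K: "compactin X_top (coset ` Cset R)"
proof (rule image_compactin[OF _ coset_cont])
  show "compactin (top_of_set SL3R) (Cset R)"
    using compact_Cset Cset_sub by (simp add: compactin_subtopology compactin_euclidean_iff)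
qed


definition tri :: "real \<Rightarrow> real \<Rightarrow> real \<Rightarrow> (real \<times> real) set" where
  "tri a b c = {p. fst p \<le> a \<and> snd p \<le> b \<and> c \<le> fst p + snd p}"

lemma tri_closed: "closed (tri a b c)"
  unfolding tri_def by (intro closed_Collect_conj closed_Collect_le continuous_intros)

lemma tri_sets: "tri a b c \<in> sets lborel"
  using tri_closed by (simp add: borel_closed)

lemma tri_emeasure: "emeasure lborel (tri a b c) = ennreal ((max 0 (a+b-c))^2/2)"
proof -
  define L where "L = c - b"
  have X: "tri a b c \<in> sets (lborel \<Otimes>\<^sub>M lborel)" unfolding lborel_prod by (rule tri_sets)
  have eq: "emeasure lborel (Pair x -` tri a b c) = ennreal (indicator {L..a} x * (x - L))" for x
  proof (cases "x \<le> a")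
    case True
    then have "Pair x -` tri a b c = {c - x..b}" unfolding tri_def by auto
    then show ?thesis using True unfolding L_def by (auto simp: emeasure_lborel_Icc_eq indicator_def)
  next
    case False
    then have "Pair x -` tri a b c = {}" unfolding tri_def by auto
    then show ?thesis using False by (simp add: indicator_def)
  qed
  have "emeasure lborel (tri a b c) = emeasure (lborel \<Otimes>\<^sub>M lborel) (tri a b c)" by (simp add: lborel_prod)
  also have "\<dots> = (\<integral>\<^sup>+ x. emeasure lborel (Pair x -` tri a b c) \<partial>lborel)"
    by (rule lborel.emeasure_pair_measure_alt[OF X])
  also have "\<dots> = (\<integral>\<^sup>+ x. ennreal (indicator {L..a} x * (x - L)) \<partial>lborel)" unfolding eq ..
  also have "\<dots> = ennreal ((max 0 (a+b-c))^2/2)"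
  proof (cases "L \<le> a")
    case True
    have "((\<lambda>x. x - L) has_integral ((\<lambda>x. (x - L)^2/2) a - (\<lambda>x. (x - L)^2/2) L)) {L..a}"
    proof (rule fundamental_theorem_of_calculus[OF True])
      fix x assume "x \<in> {L..a}"
      have "((\<lambda>x. (x - L)^2/2) has_real_derivative (x - L)) (at x within {L..a})"
        by (auto intro!: derivative_eq_intros simp: power2_eq_square field_simps)
      then show "((\<lambda>x. (x - L)^2/2) has_vector_derivative (x - L)) (at x within {L..a})"
        by (simp add: has_real_derivative_iff_has_vector_derivative)
    qed
    then have "((\<lambda>x. x - L) has_integral ((a - L)^2/2)) {L..a}" by simp
    then have "(\<integral>\<^sup>+ x. ennreal (indicator {L..a} x * (x - L)) \<partial>lborel) = ennreal ((a - L)^2/2)"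
      using nn_integral_has_integral_lebesgue[of "{L..a}" "\<lambda>x. x - L"] by auto
    moreover have "max 0 (a+b-c) = a - L" using True unfolding L_def by auto
    ultimately show ?thesis by simp
  next
    case False
    then have "indicator {L..a} x = (0::real)" for x by (auto simp: indicator_def)
    moreover have "max 0 (a+b-c) = 0" using False unfolding L_def by auto
    ultimately show ?thesis by simp
  qed
  finally show ?thesis .
qed

lemma tri_measure: "measure lborel (tri a b c) = (max 0 (a+b-c))^2/2"
  unfolding measure_def tri_emeasure by simp

lemma tri_finite: "emeasure lborel (tri a b c) \<noteq> \<infinity>"
  unfolding tri_emeasure by simp

lemma sq_emeasure: "T \<ge> 0 \<Longrightarrow> emeasure lborel ({0..T} \<times> {0..T}) = ennreal (T^2)"
proof -
  assume T: "T \<ge> 0"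
  have "emeasure lborel ({0..T} \<times> {0..T::real}) = emeasure (lborel \<Otimes>\<^sub>M lborel) ({0..T} \<times> {0..T::real})"
    by (simp add: lborel_prod)
  also have "\<dots> = emeasure lborel {0..T} * emeasure lborel {0..T}"
    by (rule lborel.emeasure_pair_measure_Times) auto
  also have "\<dots> = ennreal (T^2)" using T by (simp add: ennreal_mult' power2_eq_square)
  finally show ?thesis .
qed

lemma sq_measure: "T \<ge> 0 \<Longrightarrow> measure lborel ({0..T} \<times> {0..T}) = T^2"
  unfolding measure_def using sq_emeasure by simp


lemma at_mult: "(a_st s t ** tau \<alpha> \<beta>) *v u =
   vector [exp(-s-t) * u$1, exp s * (\<alpha> * u$1 + u$2), exp t * (\<beta> * u$1 + u$3)]"
  by (simp add: vec_eq_iff forall_3 a_st_def tau_def matrix_matrix_mult_def matrix_vector_mult_def sum_3 algebra_simps)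

lemma det_at: "det (a_st s t ** tau \<alpha> \<beta>) = 1"
proof -
  have "det (a_st s t) = exp(-s-t) * exp s * exp t" by (simp add: a_st_def det_3)
  also have "\<dots> = 1" by (simp add: exp_add[symmetric] exp_diff)
  finally have "det (a_st s t) = 1" .
  moreover have "det (tau \<alpha> \<beta>) = 1" by (simp add: tau_def det_3)
  ultimately show ?thesis by (simp add: det_mul)
qed

lemma dni_le: "dni x \<le> \<bar>x - of_int j\<bar>"
  unfolding dni_def by (rule round_diff_minimal)

lemma dni_nonneg: "dni x \<ge> 0"
  unfolding dni_def by simp

lemma dni_mult: "dni (real k * x) \<le> real k * dni x"
proof -
  have "dni (real k * x) \<le> \<bar>real k * x - of_int (int k * round x)\<bar>" by (rule dni_le)
  also have "\<dots> = \<bar>real k * (x - of_int (round x))\<bar>" by (simp add: algebra_simps)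
  also have "\<dots> = real k * dni x" unfolding dni_def abs_mult by simp
  finally show ?thesis .
qed

lemma short_vec:
  assumes s: "0 \<le> s" and t: "0 \<le> t" and d: "0 < \<delta>" "\<delta> \<le> 1"
    and u: "intv u" "u \<noteq> 0" and sh: "norm ((a_st s t ** tau \<alpha> \<beta>) *v u) < \<delta>"
  shows "\<exists>n::nat. 1 \<le> n \<and> real n < \<delta> * exp (s+t) \<and> dni (real n * \<alpha>) * exp s < \<delta> \<and> dni (real n * \<beta>) * exp t < \<delta>"
proof -
  let ?v = "(a_st s t ** tau \<alpha> \<beta>) *v u"
  have c: "\<bar>?v $ i\<bar> < \<delta>" for i using component_le_norm_cart[of ?v i] sh by linarith
  obtain m1 m2 m3 where m: "u$1 = of_int m1" "u$2 = of_int m2" "u$3 = of_int m3"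
    using u(1) unfolding intv_def by (meson Ints_cases)
  have c1: "\<bar>exp(-s-t) * of_int m1\<bar> < \<delta>" using c[of 1] m unfolding at_mult by simp
  have c2: "\<bar>exp s * (\<alpha> * of_int m1 + of_int m2)\<bar> < \<delta>" using c[of 2] m unfolding at_mult by simp
  have c3: "\<bar>exp t * (\<beta> * of_int m1 + of_int m3)\<bar> < \<delta>" using c[of 3] m unfolding at_mult by simp
  have es: "exp s \<ge> 1" "exp t \<ge> 1" using s t by auto
  have m1nz: "m1 \<noteq> 0"
  proof
    assume m10: "m1 = 0"
    have "\<bar>real_of_int m2\<bar> \<le> exp s * \<bar>real_of_int m2\<bar>" using es by (simp add: mult_le_cancel_right1)
    then have "\<bar>real_of_int m2\<bar> < 1" using c2 m10 d by (simp add: abs_mult)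
    then have "m2 = 0" by linarith
    have "\<bar>real_of_int m3\<bar> \<le> exp t * \<bar>real_of_int m3\<bar>" using es by (simp add: mult_le_cancel_right1)
    then have "\<bar>real_of_int m3\<bar> < 1" using c3 m10 d by (simp add: abs_mult)
    then have "m3 = 0" by linarith
    have "u = 0" using m m10 \<open>m2 = 0\<close> \<open>m3 = 0\<close> by (simp add: vec_eq_iff forall_3)
    then show False using u(2) by simp
  qed
  define n where "n = nat \<bar>m1\<bar>"
  have rn: "real n = \<bar>real_of_int m1\<bar>" unfolding n_def by simp
  have n1: "1 \<le> n" using m1nz unfolding n_def by simp
  have "real n * exp(-s-t) < \<delta>" using c1 rn by (simp add: abs_mult mult.commute)
  then have nb: "real n < \<delta> * exp (s+t)"
    by (simp add: exp_diff exp_minus field_simps exp_add)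
  have da: "dni (real n * \<alpha>) \<le> \<bar>\<alpha> * of_int m1 + of_int m2\<bar>"
  proof (cases "m1 \<ge> 0")
    case True
    then have e: "real n * \<alpha> = \<alpha> * of_int m1" using rn by simp
    show ?thesis unfolding e using dni_le[of "\<alpha> * of_int m1" "- m2"] by simp
  next
    case False
    then have e: "real n * \<alpha> = - (\<alpha> * of_int m1)" using rn by simp
    have "\<bar>- (\<alpha> * of_int m1) - of_int m2\<bar> = \<bar>\<alpha> * of_int m1 + of_int m2\<bar>" by arith
    then show ?thesis unfolding e using dni_le[of "- (\<alpha> * of_int m1)" "m2"] by simp
  qed
  have db: "dni (real n * \<beta>) \<le> \<bar>\<beta> * of_int m1 + of_int m3\<bar>"
  proof (cases "m1 \<ge> 0")
    case True
    then have e: "real n * \<beta> = \<beta> * of_int m1" using rn by simp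
    show ?thesis unfolding e using dni_le[of "\<beta> * of_int m1" "- m3"] by simp
  next
    case False
    then have e: "real n * \<beta> = - (\<beta> * of_int m1)" using rn by simp
    have "\<bar>- (\<beta> * of_int m1) - of_int m3\<bar> = \<bar>\<beta> * of_int m1 + of_int m3\<bar>" by arith
    then show ?thesis unfolding e using dni_le[of "- (\<beta> * of_int m1)" "m3"] by simp
  qed
  have "dni (real n * \<alpha>) * exp s \<le> \<bar>\<alpha> * of_int m1 + of_int m2\<bar> * exp s"
    using da by (intro mult_right_mono) auto
  also have "\<dots> < \<delta>" using c2 by (simp add: abs_mult mult.commute)
  finally have A: "dni (real n * \<alpha>) * exp s < \<delta>" .
  have "dni (real n * \<beta>) * exp t \<le> \<bar>\<beta> * of_int m1 + of_int m3\<bar> * exp t"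
    using db by (intro mult_right_mono) auto
  also have "\<dots> < \<delta>" using c3 by (simp add: abs_mult mult.commute)
  finally have B: "dni (real n * \<beta>) * exp t < \<delta>" .
  show ?thesis using n1 nb A B by blast
qed


lemma a_st_chi: "a_st s t = (\<chi> i j. if i = j then (if i = 1 then exp(-s-t) else if i = 2 then exp s else exp t) else 0)"
  by (simp add: vec_eq_iff forall_3 a_st_def)

lemma cont_F: "continuous_on UNIV (\<lambda>p::real\<times>real. a_st (fst p) (snd p) ** B)"
proof -
  have e: "(\<lambda>p::real\<times>real. a_st (fst p) (snd p) ** B) =
     (\<lambda>p. \<chi> i j. \<Sum>k\<in>UNIV. (if i = k then (if i = 1 then exp(-fst p - snd p) else if i = 2 then exp (fst p) else exp (snd p)) else 0) * B$k$j)"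
    by (rule ext) (simp add: a_st_chi matrix_matrix_mult_def)
  have c: "continuous_on UNIV (\<lambda>p::real\<times>real. (if i = k then (if i = 1 then exp(-fst p - snd p) else if i = 2 then exp (fst p) else exp (snd p)) else 0) * B$k$j)" for i k j
    by (cases "i = k"; cases "i = 1"; cases "i = 2") (auto intro!: continuous_intros)
  show ?thesis unfolding e
    by (intro continuous_on_vec_lambda continuous_on_sum c)
qed

lemma countable_SL3Z: "countable SL3Z"
proof -
  have "SL3Z \<subseteq> range (\<lambda>f::3\<Rightarrow>3\<Rightarrow>int. \<chi> i j. real_of_int (f i j))"
  proof
    fix g assume "g \<in> SL3Z"
    then have "\<forall>i j. g$i$j \<in> \<int>" unfolding SL3Z_def by auto
    then have "g = (\<chi> i j. real_of_int ((\<lambda>i j. floor (g$i$j)) i j))"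
      by (simp add: vec_eq_iff)
    then show "g \<in> range (\<lambda>f::3\<Rightarrow>3\<Rightarrow>int. \<chi> i j. real_of_int (f i j))"
      by (rule image_eqI[where x="\<lambda>i j. floor (g$i$j)"]) simp_all
  qed
  moreover have "countable (range (\<lambda>f::3\<Rightarrow>3\<Rightarrow>int. \<chi> i j. real_of_int (f i j)))"
    by (intro countable_image) simp
  ultimately show ?thesis by (rule countable_subset)
qed

lemma A_eq:
  "{p \<in> {0..T} \<times> {0..T}. act (a_st (fst p) (snd p)) (coset (tau \<alpha> \<beta>)) \<in> coset ` C} =
   ({0..T} \<times> {0..T}) \<inter> (\<Union>U\<in>SL3Z. (\<lambda>p. a_st (fst p) (snd p) ** (tau \<alpha> \<beta> ** U)) -` C)"
  by (auto simp: act_coset coset_in_image matrix_mul_assoc)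

lemma A_sets:
  assumes "closed C"
  shows "{p \<in> {0..T} \<times> {0..T}. act (a_st (fst p) (snd p)) (coset (tau \<alpha> \<beta>)) \<in> coset ` C} \<in> sets lborel"
  unfolding A_eq
proof (intro sets.Int sets.countable_UN'' countable_SL3Z)
  show "{0..T} \<times> {0..T} \<in> sets lborel" by (simp add: borel_closed closed_Times)
  fix U
  show "(\<lambda>p. a_st (fst p) (snd p) ** (tau \<alpha> \<beta> ** U)) -` C \<in> sets lborel"
    using closed_vimage[OF assms cont_F] by (simp add: borel_closed)
qed


definition Sset :: "real \<Rightarrow> real \<Rightarrow> real \<Rightarrow> real \<Rightarrow> nat set" where
  "Sset T \<epsilon> \<alpha> \<beta> = {n::nat. 1 \<le> n \<and> real n < exp (2 * T) \<and> real n * dni (real n * \<alpha>) * dni (real n * \<beta>) < \<epsilon>}"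

definition A1 :: "real \<Rightarrow> real \<Rightarrow> real \<Rightarrow> real" where
  "A1 T \<delta> x = (if x = 0 then T else min T (ln (\<delta>/x)))"

definition trin :: "real \<Rightarrow> real \<Rightarrow> real \<Rightarrow> real \<Rightarrow> nat \<Rightarrow> (real \<times> real) set" where
  "trin T \<epsilon> \<alpha> \<beta> n = tri (A1 T \<epsilon> (dni (real n * \<alpha>))) (A1 T \<epsilon> (dni (real n * \<beta>))) (ln (real n / \<epsilon>))"

lemma finite_Sset: "finite (Sset T \<epsilon> \<alpha> \<beta>)"
proof -
  have "Sset T \<epsilon> \<alpha> \<beta> \<subseteq> {..nat \<lceil>exp (2*T)\<rceil>}"
  proof
    fix n assume "n \<in> Sset T \<epsilon> \<alpha> \<beta>"
    then have "real n < exp (2*T)" unfolding Sset_def by auto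
    then have "n \<le> nat \<lceil>exp (2*T)\<rceil>" by linarith
    then show "n \<in> {..nat \<lceil>exp (2*T)\<rceil>}" by simp
  qed
  then show ?thesis by (rule finite_subset) simp
qed

lemma A1_le: "x \<ge> 0 \<Longrightarrow> 0 < \<delta> \<Longrightarrow> s \<le> T \<Longrightarrow> x * exp s < \<delta> \<Longrightarrow> s \<le> A1 T \<delta> x"
proof -
  assume x: "x \<ge> 0" and d: "0 < \<delta>" and sT: "s \<le> T" and xs: "x * exp s < \<delta>"
  show ?thesis
  proof (cases "x = 0")
    case True then show ?thesis using sT unfolding A1_def by simp
  next
    case False
    then have xp: "x > 0" using x by simp
    then have "exp s < \<delta>/x" using xs by (simp add: field_simps)
    then have "ln (exp s) < ln (\<delta>/x)" using xp d by (subst ln_less_cancel_iff) auto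
    then show ?thesis using sT False unfolding A1_def by simp
  qed
qed

lemma cover:
  assumes e: "0 < \<epsilon>" "\<epsilon> < 1/2" and p: "p \<in> {0..T} \<times> {0..T}"
    and nK: "act (a_st (fst p) (snd p)) (coset (tau \<alpha> \<beta>)) \<notin> coset ` Cset (3/\<epsilon>^2)"
  shows "\<exists>n\<in>Sset T \<epsilon> \<alpha> \<beta>. p \<in> trin T \<epsilon> \<alpha> \<beta> n"
proof -
  obtain s t where st: "p = (s,t)" by (cases p)
  have s: "0 \<le> s" "s \<le> T" and t: "0 \<le> t" "t \<le> T" using p st by auto
  define g where "g = a_st s t ** tau \<alpha> \<beta>"
  have "coset g \<notin> coset ` Cset (3/\<epsilon>^2)" using nK st unfolding g_def by (simp add: act_coset)
  then have nU: "\<not> (\<exists>U\<in>SL3Z. g ** U \<in> Cset (3/\<epsilon>^2))" using coset_in_image by blast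
  have e1: "\<epsilon> \<le> 1" using e by simp
  have "\<exists>u. intv u \<and> u \<noteq> 0 \<and> norm (g *v u) < \<epsilon>"
  proof (rule ccontr)
    assume "\<not> (\<exists>u. intv u \<and> u \<noteq> 0 \<and> norm (g *v u) < \<epsilon>)"
    then have "\<And>u. intv u \<Longrightarrow> u \<noteq> 0 \<Longrightarrow> \<epsilon> \<le> norm (g *v u)" by (meson not_le)
    then have "\<exists>U\<in>SL3Z. g ** U \<in> Cset (3/\<epsilon>^2)" using mahler_mat[OF _ e(1) e1] det_at unfolding g_def by blast
    then show False using nU by blast
  qed
  then obtain u where u: "intv u" "u \<noteq> 0" "norm (g *v u) < \<epsilon>" by blast
  obtain n :: nat where n: "1 \<le> n" "real n < \<epsilon> * exp (s+t)" "dni (real n * \<alpha>) * exp s < \<epsilon>"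
      "dni (real n * \<beta>) * exp t < \<epsilon>"
    using short_vec[OF s(1) t(1) e(1) e1 u(1) u(2)] u(3) unfolding g_def by blast
  define da where "da = dni (real n * \<alpha>)"
  define db where "db = dni (real n * \<beta>)"
  have da0: "da \<ge> 0" and db0: "db \<ge> 0" unfolding da_def db_def by (simp_all add: dni_nonneg)
  have npos: "real n > 0" using n by simp
  have "real n < exp (2*T)"
  proof -
    have "\<epsilon> * exp (s+t) \<le> 1 * exp (2*T)" using e1 s t by (intro mult_mono) auto
    then show ?thesis using n by simp
  qed
  moreover have "real n * da * db < \<epsilon>"
  proof -
    have "real n * da * db * (exp s * exp t) = real n * (da * exp s) * (db * exp t)" by (simp add: algebra_simps)
    also have "\<dots> \<le> real n * \<epsilon> * \<epsilon>" using n da0 db0 e(1) unfolding da_def db_def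
      by (intro mult_mono mult_left_mono) (auto simp: less_imp_le)
    also have "\<dots> < \<epsilon> * exp (s+t) * \<epsilon> * \<epsilon>" using n e by (intro mult_strict_right_mono) auto
    finally have "real n * da * db * (exp s * exp t) < \<epsilon>^3 * (exp s * exp t)"
      by (simp add: exp_add power3_eq_cube algebra_simps)
    then have "real n * da * db < \<epsilon>^3" by simp
    also have "\<epsilon>^3 \<le> \<epsilon>^1" using e by (intro power_decreasing) auto
    finally show ?thesis by simp
  qed
  ultimately have nS: "n \<in> Sset T \<epsilon> \<alpha> \<beta>" using n unfolding Sset_def da_def db_def by auto
  have "s \<le> A1 T \<epsilon> da" using A1_le[OF da0 e(1) s(2)] n unfolding da_def by auto
  moreover have "t \<le> A1 T \<epsilon> db" using A1_le[OF db0 e(1) t(2)] n unfolding db_def by auto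
  moreover have "ln (real n / \<epsilon>) \<le> s + t"
  proof -
    have "real n / \<epsilon> < exp (s+t)" using n e by (simp add: field_simps)
    then have "ln (real n / \<epsilon>) < ln (exp (s+t))" using npos e by (subst ln_less_cancel_iff) auto
    then show ?thesis by simp
  qed
  ultimately have "p \<in> trin T \<epsilon> \<alpha> \<beta> n" unfolding trin_def tri_def st da_def db_def by simp
  then show ?thesis using nS by blast
qed


lemma sum_ineq:
  assumes T: "0 \<le> T" and e: "0 < \<epsilon>" "\<epsilon> < 1/2"
  shows "T^2 \<le> measure lborel {p \<in> {0..T} \<times> {0..T}. act (a_st (fst p) (snd p)) (coset (tau \<alpha> \<beta>)) \<in> coset ` Cset (3/\<epsilon>^2)}
           + (\<Sum>n\<in>Sset T \<epsilon> \<alpha> \<beta>. measure lborel (trin T \<epsilon> \<alpha> \<beta> n))"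
proof -
  define A where "A = {p \<in> {0..T} \<times> {0..T}. act (a_st (fst p) (snd p)) (coset (tau \<alpha> \<beta>)) \<in> coset ` Cset (3/\<epsilon>^2)}"
  define S where "S = Sset T \<epsilon> \<alpha> \<beta>"
  define W where "W = (\<Union>n\<in>S. trin T \<epsilon> \<alpha> \<beta> n)"
  have As: "A \<in> sets lborel" unfolding A_def by (rule A_sets) (rule compact_imp_closed[OF compact_Cset])
  have trs: "trin T \<epsilon> \<alpha> \<beta> n \<in> sets lborel" for n unfolding trin_def by (rule tri_sets)
  have fS: "finite S" unfolding S_def by (rule finite_Sset)
  have Ws: "W \<in> sets lborel" unfolding W_def using fS trs by (intro sets.finite_UN) auto
  have sqs: "{0..T} \<times> {0..T::real} \<in> sets lborel" by (simp add: borel_closed closed_Times)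
  have sub: "{0..T} \<times> {0..T} \<subseteq> A \<union> W"
  proof
    fix p assume p: "p \<in> {0..T} \<times> {0..T}"
    show "p \<in> A \<union> W"
    proof (cases "act (a_st (fst p) (snd p)) (coset (tau \<alpha> \<beta>)) \<in> coset ` Cset (3/\<epsilon>^2)")
      case True then show ?thesis using p unfolding A_def by auto
    next
      case False then show ?thesis using cover[OF e p False] unfolding W_def S_def by auto
    qed
  qed
  have sqm: "emeasure lborel ({0..T} \<times> {0..T}) = ennreal (T^2)"
    using sq_emeasure[OF T] .
  have "emeasure lborel A \<le> emeasure lborel ({0..T} \<times> {0..T})"
    by (rule emeasure_mono[OF _ sqs]) (auto simp: A_def)
  then have Afin: "emeasure lborel A \<noteq> \<infinity>" using sqm by (auto simp: top_unique)
  have "ennreal (T^2) = emeasure lborel ({0..T} \<times> {0..T})" using sqm by simp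
  also have "\<dots> \<le> emeasure lborel (A \<union> W)" by (rule emeasure_mono[OF sub]) (use As Ws in auto)
  also have "\<dots> \<le> emeasure lborel A + emeasure lborel W" by (rule emeasure_subadditive[OF As Ws])
  also have "emeasure lborel W \<le> (\<Sum>n\<in>S. emeasure lborel (trin T \<epsilon> \<alpha> \<beta> n))"
    unfolding W_def using fS trs by (intro emeasure_subadditive_finite) auto
  also have "(\<Sum>n\<in>S. emeasure lborel (trin T \<epsilon> \<alpha> \<beta> n)) = (\<Sum>n\<in>S. ennreal (measure lborel (trin T \<epsilon> \<alpha> \<beta> n)))"
    unfolding trin_def tri_emeasure tri_measure ..
  also have "\<dots> = ennreal (\<Sum>n\<in>S. measure lborel (trin T \<epsilon> \<alpha> \<beta> n))" by (rule sum_ennreal) simp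
  also have "emeasure lborel A = ennreal (measure lborel A)" using Afin by (simp add: emeasure_eq_ennreal_measure)
  finally have "ennreal (T^2) \<le> ennreal (measure lborel A + (\<Sum>n\<in>S. measure lborel (trin T \<epsilon> \<alpha> \<beta> n)))"
    by (simp add: ennreal_plus sum_nonneg add_mono)
  then show ?thesis unfolding A_def[symmetric] S_def[symmetric]
    by (subst (asm) ennreal_le_iff) (auto intro!: add_nonneg_nonneg sum_nonneg)
qed


lemma A1_leT: "A1 T \<delta> x \<le> T" unfolding A1_def by auto

lemma A1_le_ln: "x \<noteq> 0 \<Longrightarrow> A1 T \<delta> x \<le> ln (\<delta>/x)" unfolding A1_def by auto

lemma exp_6ln: "(T::real) > 0 \<Longrightarrow> exp (6 * ln T) = T^6"
proof -
  assume "T > 0"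
  have "exp (real 6 * ln T) = exp (ln T) ^ 6" by (rule exp_of_nat_mult)
  then have "exp (6 * ln T) = exp (ln T) ^ 6" by simp
  then show ?thesis using \<open>T > 0\<close> by simp
qed

lemma large:
  assumes T: "3 \<le> T" and e: "0 < \<epsilon>" "\<epsilon> < 1/2" and nS: "n \<in> Sset T \<epsilon> \<alpha> \<beta>"
    and D: "6 * ln T < A1 T \<epsilon> (dni (real n * \<alpha>)) + A1 T \<epsilon> (dni (real n * \<beta>)) - ln (real n / \<epsilon>)"
  shows "T^2 - 1 \<le> real (card (Sset T \<epsilon> \<alpha> \<beta>))"
proof -
  define da where "da = dni (real n * \<alpha>)"
  define db where "db = dni (real n * \<beta>)"
  define P where "P = real n * da * db"
  have da0: "da \<ge> 0" and db0: "db \<ge> 0" unfolding da_def db_def by (simp_all add: dni_nonneg)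
  have n1: "1 \<le> n" using nS unfolding Sset_def by auto
  have npos: "real n > 0" using n1 by simp
  have Tpos: "T > 0" using T by simp
  have T6: "T^6 > 0" using Tpos by simp
  have P0: "P \<ge> 0" unfolding P_def using da0 db0 by simp
  have nb: "real n * T^6 < \<epsilon> * exp (2*T)"
  proof -
    have "6 * ln T < 2*T - ln (real n / \<epsilon>)" using D A1_leT[of T \<epsilon>] unfolding da_def db_def
      by (smt (verit) A1_leT)
    then have "ln (real n / \<epsilon>) < 2*T - 6 * ln T" by linarith
    then have "exp (ln (real n / \<epsilon>)) < exp (2*T - 6 * ln T)" by simp
    then have "real n / \<epsilon> < exp (2*T) / T^6" using npos e Tpos by (simp add: exp_diff exp_6ln)
    then show ?thesis using e T6 by (simp add: field_simps)
  qed
  have Pb: "P * T^6 < \<epsilon>^3"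
  proof (cases "da = 0 \<or> db = 0")
    case True then show ?thesis unfolding P_def using e by auto
  next
    case False
    then have dap: "da > 0" and dbp: "db > 0" using da0 db0 by auto
    have "6 * ln T < ln (\<epsilon>/da) + ln (\<epsilon>/db) - ln (real n / \<epsilon>)"
      using D A1_le_ln[of da T \<epsilon>] A1_le_ln[of db T \<epsilon>] False unfolding da_def db_def by linarith
    also have "\<dots> = ln (\<epsilon>^3 / P)" unfolding P_def using dap dbp npos e
      by (simp add: ln_div ln_mult power3_eq_cube)
    finally have "exp (6 * ln T) < exp (ln (\<epsilon>^3 / P))" by simp
    then have "T^6 < \<epsilon>^3 / P" using Tpos dap dbp npos e unfolding P_def by (simp add: exp_6ln)
    moreover have "P > 0" unfolding P_def using dap dbp npos by simp
    ultimately show ?thesis by (simp add: field_simps)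
  qed
  define N where "N = nat \<lfloor>T^2\<rfloor>"
  have kS: "k * n \<in> Sset T \<epsilon> \<alpha> \<beta>" if k: "k \<in> {1..N}" for k
  proof -
    have k1: "1 \<le> k" using k by simp
    have kT2: "real k \<le> T^2" using k unfolding N_def by (simp add: le_nat_floor) linarith
    have T26: "T^2 \<le> T^6" using T by (intro power_increasing) auto
    have kT6: "real k \<le> T^6" using kT2 T26 by linarith
    have "real k ^ 3 \<le> (T^2)^3" using kT2 by (intro power_mono) auto
    then have k3: "real k ^ 3 \<le> T^6" by (simp add: power_mult[symmetric])
    have "real (k * n) = real k * real n" by simp
    also have "\<dots> \<le> T^6 * real n" using kT6 npos by (intro mult_right_mono) auto
    also have "\<dots> < \<epsilon> * exp (2*T)" using nb by (simp add: mult.commute)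
    also have "\<dots> \<le> exp (2*T)" using e by simp
    finally have c1: "real (k * n) < exp (2 * T)" .
    have dk1: "dni (real (k * n) * \<alpha>) \<le> real k * da"
      unfolding da_def using dni_mult[of k "real n * \<alpha>"] by (simp add: mult.assoc)
    have dk2: "dni (real (k * n) * \<beta>) \<le> real k * db"
      unfolding db_def using dni_mult[of k "real n * \<beta>"] by (simp add: mult.assoc)
    have "real (k * n) * dni (real (k * n) * \<alpha>) * dni (real (k * n) * \<beta>) \<le> real (k*n) * (real k * da) * (real k * db)"
      using dk1 dk2 by (intro mult_mono mult_left_mono) (auto simp: dni_nonneg da0 db0)
    also have "\<dots> = real k ^ 3 * P" unfolding P_def by (simp add: power3_eq_cube algebra_simps)
    also have "\<dots> \<le> T^6 * P" using k3 P0 by (intro mult_right_mono)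
    also have "\<dots> < \<epsilon>^3" using Pb by (simp add: mult.commute)
    also have "\<epsilon>^3 \<le> \<epsilon>^1" using e by (intro power_decreasing) auto
    finally have c2: "real (k * n) * dni (real (k * n) * \<alpha>) * dni (real (k * n) * \<beta>) < \<epsilon>" by simp
    have "1 \<le> k * n" using k1 n1 by simp
    then show ?thesis unfolding Sset_def using c1 c2 by simp
  qed
  have inj: "inj_on (\<lambda>k. k * n) {1..N}" using n1 by (auto simp: inj_on_def)
  have "card {1..N} \<le> card (Sset T \<epsilon> \<alpha> \<beta>)"
    by (rule card_inj_on_le[OF inj _ finite_Sset]) (use kS in auto)
  then have "real N \<le> real (card (Sset T \<epsilon> \<alpha> \<beta>))" by simp
  moreover have "T^2 - 1 \<le> real N" unfolding N_def by linarith
  ultimately show ?thesis by linarith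
qed


lemma key:
  assumes T: "3 \<le> T" and e: "0 < \<epsilon>" "\<epsilon> < 1/2" and \<eta>: "0 \<le> \<eta>" and \<gamma>1: "\<gamma> < 1"
    and emp: "emp_measure T (coset (tau \<alpha> \<beta>)) (coset ` Cset (3/\<epsilon>^2)) \<le> 1 - \<gamma> + \<eta>"
  shows "(\<gamma> - \<eta>)/18 \<le> (ln T)^2 / T^2 * real (card (Sset T \<epsilon> \<alpha> \<beta>))"
proof -
  define S where "S = Sset T \<epsilon> \<alpha> \<beta>"
  have Tpos: "T > 0" using T by simp
  have "exp 1 \<le> T" using exp_le T by linarith
  then have "ln (exp 1) \<le> ln T" using Tpos by (subst ln_le_cancel_iff) auto
  then have lnT: "1 \<le> ln T" by simp
  have lnT2: "1 \<le> (ln T)^2" using lnT by (simp add: one_le_power)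
  have "3*3 \<le> T*T" using T by (intro mult_mono) auto
  then have T2: "9 \<le> T^2" by (simp add: power2_eq_square)
  show ?thesis
  proof (cases "\<exists>n\<in>S. 6 * ln T < A1 T \<epsilon> (dni (real n * \<alpha>)) + A1 T \<epsilon> (dni (real n * \<beta>)) - ln (real n / \<epsilon>)")
    case True
    then obtain n where "n \<in> S" "6 * ln T < A1 T \<epsilon> (dni (real n * \<alpha>)) + A1 T \<epsilon> (dni (real n * \<beta>)) - ln (real n / \<epsilon>)"
      by blast
    then have c: "T^2 - 1 \<le> real (card S)" unfolding S_def using large[OF T e] by blast
    have "(\<gamma> - \<eta>)/18 \<le> 1/18" using \<gamma>1 \<eta> by simp
    also have "\<dots> \<le> 1 - 1/T^2"
    proof -
      have "1/T^2 \<le> 1/9" using T2 by (intro divide_left_mono) auto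
      then show ?thesis by linarith
    qed
    also have "1 - 1/T^2 = (T^2 - 1)/T^2" using Tpos by (simp add: field_simps)
    also have "\<dots> \<le> real (card S) / T^2" using c Tpos by (intro divide_right_mono) auto
    also have "\<dots> \<le> (ln T)^2 * (real (card S) / T^2)"
    proof -
      have "0 \<le> real (card S) / T^2" by simp
      from mult_right_mono[OF lnT2 this] show ?thesis by simp
    qed
    finally show ?thesis unfolding S_def by simp
  next
    case False
    then have Dn: "A1 T \<epsilon> (dni (real n * \<alpha>)) + A1 T \<epsilon> (dni (real n * \<beta>)) - ln (real n / \<epsilon>) \<le> 6 * ln T"
      if "n \<in> S" for n using that by (meson not_le)
    have tm: "measure lborel (trin T \<epsilon> \<alpha> \<beta> n) \<le> 18 * (ln T)^2" if "n \<in> S" for n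
    proof -
      have m0: "0 \<le> max 0 (A1 T \<epsilon> (dni (real n * \<alpha>)) + A1 T \<epsilon> (dni (real n * \<beta>)) - ln (real n / \<epsilon>))" by simp
      have "max 0 (A1 T \<epsilon> (dni (real n * \<alpha>)) + A1 T \<epsilon> (dni (real n * \<beta>)) - ln (real n / \<epsilon>)) \<le> 6 * ln T"
        using Dn[OF that] lnT by simp
      then have "(max 0 (A1 T \<epsilon> (dni (real n * \<alpha>)) + A1 T \<epsilon> (dni (real n * \<beta>)) - ln (real n / \<epsilon>)))^2 \<le> (6 * ln T)^2"
        using m0 by (intro power_mono) auto
      then show ?thesis unfolding trin_def tri_measure by (simp add: power_mult_distrib)
    qed
    have "(\<Sum>n\<in>S. measure lborel (trin T \<epsilon> \<alpha> \<beta> n)) \<le> real (card S) * (18 * (ln T)^2)"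
      using sum_bounded_above[of S "\<lambda>n. measure lborel (trin T \<epsilon> \<alpha> \<beta> n)" "18 * (ln T)^2"] tm by simp
    moreover have "T^2 \<le> measure lborel {p \<in> {0..T} \<times> {0..T}. act (a_st (fst p) (snd p)) (coset (tau \<alpha> \<beta>)) \<in> coset ` Cset (3/\<epsilon>^2)}
           + (\<Sum>n\<in>S. measure lborel (trin T \<epsilon> \<alpha> \<beta> n))" unfolding S_def using sum_ineq[OF _ e] Tpos by simp
    moreover have "measure lborel {p \<in> {0..T} \<times> {0..T}. act (a_st (fst p) (snd p)) (coset (tau \<alpha> \<beta>)) \<in> coset ` Cset (3/\<epsilon>^2)}
       = emp_measure T (coset (tau \<alpha> \<beta>)) (coset ` Cset (3/\<epsilon>^2)) * T^2"
      unfolding emp_measure_def using Tpos by simp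
    moreover have "emp_measure T (coset (tau \<alpha> \<beta>)) (coset ` Cset (3/\<epsilon>^2)) * T^2 \<le> (1 - \<gamma> + \<eta>) * T^2"
      using emp by (intro mult_right_mono) auto
    ultimately have "T^2 \<le> (1 - \<gamma> + \<eta>) * T^2 + real (card S) * (18 * (ln T)^2)"
      by linarith
    then have "(\<gamma> - \<eta>) * T^2 \<le> 18 * ((ln T)^2 * real (card S))" by (simp add: algebra_simps)
    then have "(\<gamma> - \<eta>)/18 \<le> (ln T)^2 * real (card S) / T^2" using Tpos by (simp add: field_simps)
    then show ?thesis unfolding S_def by simp
  qed
qed


theorem theorem1p10:
  fixes \<gamma> \<alpha> \<beta> :: real and T :: "nat \<Rightarrow> real"
  assumes "0 < \<gamma>" and "\<gamma> < 1"
    and "\<And>k. T k > 0"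
    and "filterlim T at_top sequentially"
    and "\<And>K. compactin X_top K \<Longrightarrow>
           limsup (\<lambda>k. ereal (emp_measure (T k) (coset (tau \<alpha> \<beta>)) K)) \<le> ereal (1 - \<gamma>)"
  shows "\<forall>\<epsilon>. 0 < \<epsilon> \<and> \<epsilon> < 1/2 \<longrightarrow>
           liminf (\<lambda>k. ereal ((ln (T k))^2 / (T k)^2 *
              real (card {n :: nat. 1 \<le> n \<and> real n < exp (2 * T k) \<and>
                                   real n * dni (real n * \<alpha>) * dni (real n * \<beta>) < \<epsilon>})))
             \<ge> ereal (\<gamma> / 18)"
proof (intro allI impI)
  fix \<epsilon> :: real assume e: "0 < \<epsilon> \<and> \<epsilon> < 1/2"
  then have e1: "0 < \<epsilon>" and e2: "\<epsilon> < 1/2" by auto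
  define K where "K = coset ` Cset (3/\<epsilon>^2)"
  have ls: "limsup (\<lambda>k. ereal (emp_measure (T k) (coset (tau \<alpha> \<beta>)) K)) \<le> ereal (1 - \<gamma>)"
    using assms(5)[OF compactin_K] unfolding K_def .
  have evT: "eventually (\<lambda>k. 3 \<le> T k) sequentially" using assms(4) unfolding filterlim_at_top by blast
  have "ereal (\<gamma> / 18) \<le> Liminf sequentially (\<lambda>k. ereal ((ln (T k))^2 / (T k)^2 * real (card (Sset (T k) \<epsilon> \<alpha> \<beta>))))"
  proof (subst le_Liminf_iff, intro allI impI)
    fix y assume "y < ereal (\<gamma> / 18)"
    then obtain r where r: "y < ereal r" "ereal r < ereal (\<gamma> / 18)" using ereal_dense2 by blast
    define \<eta> where "\<eta> = \<gamma> - 18 * r"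
    have \<eta>0: "0 < \<eta>" using r(2) unfolding \<eta>_def by simp
    have "limsup (\<lambda>k. ereal (emp_measure (T k) (coset (tau \<alpha> \<beta>)) K)) < ereal (1 - \<gamma> + \<eta>)"
    proof -
      have "ereal (1 - \<gamma>) < ereal (1 - \<gamma> + \<eta>)" using \<eta>0 by simp
      then show ?thesis using ls by (rule le_less_trans[rotated])
    qed
    then have ev: "eventually (\<lambda>k. ereal (emp_measure (T k) (coset (tau \<alpha> \<beta>)) K) < ereal (1 - \<gamma> + \<eta>)) sequentially"
      by (rule Limsup_lessD)
    show "eventually (\<lambda>k. y < ereal ((ln (T k))^2 / (T k)^2 * real (card (Sset (T k) \<epsilon> \<alpha> \<beta>)))) sequentially"
      using ev evT
    proof eventually_elim
      case (elim k)
      have "(\<gamma> - \<eta>)/18 \<le> (ln (T k))^2 / (T k)^2 * real (card (Sset (T k) \<epsilon> \<alpha> \<beta>))"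
        using key[OF elim(2) e1 e2 less_imp_le[OF \<eta>0] assms(2)] elim(1) unfolding K_def by simp
      moreover have "(\<gamma> - \<eta>)/18 = r" unfolding \<eta>_def by simp
      ultimately have "ereal r \<le> ereal ((ln (T k))^2 / (T k)^2 * real (card (Sset (T k) \<epsilon> \<alpha> \<beta>)))" by simp
      then show ?case by (rule less_le_trans[OF r(1)])
    qed
  qed
  then show "liminf (\<lambda>k. ereal ((ln (T k))^2 / (T k)^2 *
              real (card {n :: nat. 1 \<le> n \<and> real n < exp (2 * T k) \<and>
                                   real n * dni (real n * \<alpha>) * dni (real n * \<beta>) < \<epsilon>})))
             \<ge> ereal (\<gamma> / 18)" unfolding Sset_def by simp
qed


end
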